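(* For every positive integer $r$ there exists a Heffter space with exactly $r$ parallel classes.
   Context: A half-set of an abelian group $G$ of odd order $2v+1\ge7$ is a subset $V\subseteq G\setminus\{0\}$ containing exactly one element of each pair $\{g,-g\}$, $g\ne0$. A Heffter system on $V$ with block size $k$ is a partition of $V$ into blocks of size $k$, each summing to $0$ in $G$. A Heffter space over $G$ is a partial linear space (any two distinct points lie in at most one block) with point set a half-set $V$ of $G$, together with a resolution of its blocks into parallel classes (each a partition of $V$), every parallel class being a Heffter system on $V$; its degree is the number of parallel classes. *)

theory Defs
  imports "HOL-Algebra.Algebra"
begin

text \<open>Abelian groups are HOL-Algebra commutative groups; the group operation
  (written multiplicatively in the library) plays the role of addition,
  the unit the role of 0 and inv the role of negation.\<close>

definition half_set :: "('a, 'b) monoid_scheme \<Rightarrow> 'a set \<Rightarrow> bool" where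
  "half_set G V \<longleftrightarrow> V \<subseteq> carrier G - {\<one>\<^bsub>G\<^esub>} \<and>
     (\<forall>g \<in> carrier G - {\<one>\<^bsub>G\<^esub>}. (g \<in> V \<longleftrightarrow> inv\<^bsub>G\<^esub> g \<notin> V))"

definition heffter_system :: "('a, 'b) monoid_scheme \<Rightarrow> 'a set \<Rightarrow> nat \<Rightarrow> 'a set set \<Rightarrow> bool" where
  "heffter_system G V k P \<longleftrightarrow>
     \<Union>P = V \<and>
     (\<forall>B \<in> P. \<forall>B' \<in> P. B \<noteq> B' \<longrightarrow> B \<inter> B' = {}) \<and>
     (\<forall>B \<in> P. card B = k \<and> finprod G id B = \<one>\<^bsub>G\<^esub>)"

text \<open>A Heffter space over G with point set V, block size k and degree r:
  parallel classes P 0, ..., P (r-1), each a Heffter system on V, such that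
  the blocks (counted with their class) form a partial linear space: two
  distinct blocks share at most one point.\<close>
definition heffter_space :: "('a, 'b) monoid_scheme \<Rightarrow> 'a set \<Rightarrow> nat \<Rightarrow> nat \<Rightarrow> (nat \<Rightarrow> 'a set set) \<Rightarrow> bool" where
  "heffter_space G V k r P \<longleftrightarrow>
     half_set G V \<and>
     (\<forall>i < r. heffter_system G V k (P i)) \<and>
     (\<forall>i < r. \<forall>j < r. \<forall>B \<in> P i. \<forall>B' \<in> P j.
        (i, B) \<noteq> (j, B') \<longrightarrow> card (B \<inter> B') \<le> 1)"

end

theory Submission
  imports Defs
begin

definition mk :: "int \<Rightarrow> int \<Rightarrow> int \<Rightarrow> int" where
  "mk q x y = x mod q + q * (y mod 25)"

definition Gq :: "int \<Rightarrow> int monoid" where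
  "Gq q = \<lparr>carrier = {0..<q*25}, monoid.mult = (\<lambda>u v. mk q (u mod q + v mod q) (u div q + v div q)), monoid.one = 0\<rparr>"

lemma mk_mod: "q > 0 \<Longrightarrow> mk q x y mod q = x mod q"
  unfolding mk_def by simp

lemma mk_div: "q > 0 \<Longrightarrow> mk q x y div q = y mod 25"
  unfolding mk_def by (simp add: div_add1_eq)

lemma mk_ge0: "q > 0 \<Longrightarrow> 0 \<le> mk q x y"
  unfolding mk_def by simp

lemma mk_lt: "q > 0 \<Longrightarrow> mk q x y < q * 25"
proof -
  assume q: "q > 0"
  have a: "x mod q < q" "y mod 25 \<le> 24" using q by auto
  have "q * (y mod 25) \<le> q * 24" using q a(2) by simp
  then show ?thesis unfolding mk_def using a(1) by linarith
qed

lemma mk_carrier: "q > 0 \<Longrightarrow> mk q x y \<in> {0..<q*25}"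
  using mk_ge0 mk_lt by simp

lemma div_bound: assumes q: "(q::int) > 0" and u: "0 \<le> u" "u < q*25" shows "0 \<le> u div q" "u div q < 25"
proof -
  show "0 \<le> u div q" using q u by (simp add: pos_imp_zdiv_nonneg_iff)
  have e: "q * (u div q) + u mod q = u" by simp
  have "0 \<le> u mod q" using q by simp
  then have "q * (u div q) < q * 25" using e u by linarith
  then show "u div q < 25" using q by simp
qed

lemma carrier_mk: "q > 0 \<Longrightarrow> u \<in> {0..<q*25} \<Longrightarrow> u = mk q (u mod q) (u div q)"
proof -
  assume q: "q > 0" and u: "u \<in> {0..<q*25}"
  have "u div q mod 25 = u div q" using div_bound[OF q, of u] u by simp
  then show ?thesis unfolding mk_def by simp
qed

lemma mk_eqI: "x mod q = x' mod q \<Longrightarrow> y mod 25 = y' mod 25 \<Longrightarrow> mk q x y = mk q x' y'"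
  unfolding mk_def by simp

lemma mk_eq_iff: "q > 0 \<Longrightarrow> mk q x y = mk q x' y' \<longleftrightarrow> x mod q = x' mod q \<and> y mod 25 = y' mod 25"
  by (metis mk_div mk_eqI mk_mod)

lemma Gq_mult: "u \<otimes>\<^bsub>Gq q\<^esub> v = mk q (u mod q + v mod q) (u div q + v div q)"
  by (simp add: Gq_def)

lemma Gq_carrier: "carrier (Gq q) = {0..<q*25}" by (simp add: Gq_def)
lemma Gq_one: "\<one>\<^bsub>Gq q\<^esub> = 0" by (simp add: Gq_def)

lemma Gq_comm_group: assumes q: "q > 0" shows "comm_group (Gq q)"
proof (rule comm_groupI)
  fix x y assume "x \<in> carrier (Gq q)" "y \<in> carrier (Gq q)"
  then show "x \<otimes>\<^bsub>Gq q\<^esub> y \<in> carrier (Gq q)" using q mk_carrier[OF q] by (simp only: Gq_mult Gq_carrier)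
next
  show "\<one>\<^bsub>Gq q\<^esub> \<in> carrier (Gq q)" using q by (simp add: Gq_one Gq_carrier)
next
  fix x y z assume "x \<in> carrier (Gq q)" "y \<in> carrier (Gq q)" "z \<in> carrier (Gq q)"
  show "x \<otimes>\<^bsub>Gq q\<^esub> y \<otimes>\<^bsub>Gq q\<^esub> z = x \<otimes>\<^bsub>Gq q\<^esub> (y \<otimes>\<^bsub>Gq q\<^esub> z)"
  proof -
    have m1: "((x mod q + y mod q) mod q + z mod q) mod q = (x mod q + (y mod q + z mod q) mod q) mod q"
      by (metis add.assoc mod_add_left_eq mod_add_right_eq)
    have m2: "((x div q + y div q) mod 25 + z div q) mod 25 = (x div q + (y div q + z div q) mod 25) mod 25"
      by (metis add.assoc mod_add_left_eq mod_add_right_eq)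
    show ?thesis unfolding Gq_mult
      by (rule mk_eqI) (simp_all only: mk_mod[OF q] mk_div[OF q] mod_mod_trivial m1 m2)
  qed
next
  fix x y assume "x \<in> carrier (Gq q)" "y \<in> carrier (Gq q)"
  show "x \<otimes>\<^bsub>Gq q\<^esub> y = y \<otimes>\<^bsub>Gq q\<^esub> x"
    unfolding Gq_mult by (intro mk_eqI) (simp_all add: add.commute)
next
  fix x assume x: "x \<in> carrier (Gq q)"
  show "\<one>\<^bsub>Gq q\<^esub> \<otimes>\<^bsub>Gq q\<^esub> x = x"
    unfolding Gq_mult Gq_one using q x carrier_mk[of q x] by (simp add: Gq_carrier)
next
  fix x assume x: "x \<in> carrier (Gq q)"
  show "\<exists>y\<in>carrier (Gq q). y \<otimes>\<^bsub>Gq q\<^esub> x = \<one>\<^bsub>Gq q\<^esub>"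
  proof (intro bexI)
    show "mk q (- x) (- (x div q)) \<otimes>\<^bsub>Gq q\<^esub> x = \<one>\<^bsub>Gq q\<^esub>"
    proof -
      have "mk q (- x) (- (x div q)) \<otimes>\<^bsub>Gq q\<^esub> x = mk q ((- x) mod q + x mod q) ((- (x div q)) mod 25 + x div q)"
        unfolding Gq_mult by (simp only: mk_mod[OF q] mk_div[OF q])
      also have "\<dots> = mk q 0 0"
        by (rule mk_eqI) (metis add.left_inverse mod_add_eq mod_mod_trivial)+
      also have "\<dots> = 0" by (simp add: mk_def)
      finally show ?thesis by (simp add: Gq_one)
    qed
    show "mk q (- x) (- (x div q)) \<in> carrier (Gq q)" using q mk_carrier[OF q] by (simp only: Gq_carrier)
  qed
qed

lemma Gq_finprod:
  assumes q: "q > 0" and A: "finite A" "A \<subseteq> {0..<q*25}"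
  shows "finprod (Gq q) (\<lambda>u. u) A = mk q (\<Sum>u\<in>A. u mod q) (\<Sum>u\<in>A. u div q)"
  using A
proof (induction A rule: finite_induct)
  case empty
  have "finprod (Gq q) (\<lambda>u. u) {} = \<one>\<^bsub>Gq q\<^esub>"
    using comm_group.axioms(1)[OF Gq_comm_group[OF q]] by (simp add: comm_monoid.finprod_empty)
  also have "\<dots> = mk q 0 0" by (simp add: Gq_one mk_def)
  finally show ?case by simp
next
  case (insert a F)
  have cm: "comm_monoid (Gq q)" using comm_group.axioms(1)[OF Gq_comm_group[OF q]] .
  have aF: "a \<in> {0..<q*25}" "F \<subseteq> {0..<q*25}" using insert.prems by auto
  have "finprod (Gq q) (\<lambda>u. u) (insert a F) = a \<otimes>\<^bsub>Gq q\<^esub> finprod (Gq q) (\<lambda>u. u) F"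
  proof -
    have f1: "(\<lambda>u. u) \<in> F \<rightarrow> carrier (Gq q)" using aF by (auto simp: Gq_carrier)
    have f2: "(\<lambda>u. u) a \<in> carrier (Gq q)" using aF by (auto simp: Gq_carrier)
    show ?thesis using comm_monoid.finprod_insert[OF cm insert.hyps(1,2) f1 f2] by simp
  qed
  also have "\<dots> = a \<otimes>\<^bsub>Gq q\<^esub> mk q (\<Sum>u\<in>F. u mod q) (\<Sum>u\<in>F. u div q)"
    using insert.IH aF by simp
  also have "\<dots> = mk q (a mod q + (\<Sum>u\<in>F. u mod q)) (a div q + (\<Sum>u\<in>F. u div q))"
    unfolding Gq_mult by (rule mk_eqI) (simp_all add: mk_mod[OF q] mk_div[OF q] mod_add_right_eq)
  also have "\<dots> = mk q (\<Sum>u\<in>insert a F. u mod q) (\<Sum>u\<in>insert a F. u div q)"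
    using insert.hyps by simp
  finally show ?case .
qed

lemma Gq_inv:
  assumes q: "q > 0" and u: "u \<in> {0..<q*25}"
  shows "inv\<^bsub>Gq q\<^esub> u = mk q (- u) (- (u div q))"
proof -
  have g: "group (Gq q)" using Gq_comm_group[OF q] comm_group.axioms(2) by blast
  have "mk q (- u) (- (u div q)) \<otimes>\<^bsub>Gq q\<^esub> u = mk q ((- u) mod q + u mod q) ((- (u div q)) mod 25 + u div q)"
    unfolding Gq_mult by (simp only: mk_mod[OF q] mk_div[OF q])
  also have "\<dots> = mk q 0 0"
    by (rule mk_eqI) (metis add.left_inverse mod_add_eq mod_mod_trivial)+
  also have "\<dots> = \<one>\<^bsub>Gq q\<^esub>" by (simp add: mk_def Gq_one)
  finally show ?thesis
    using group.inv_equality[OF g] u mk_carrier[OF q] by (simp add: Gq_carrier)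
qed

definition Yv :: "nat \<Rightarrow> nat \<Rightarrow> int" where
  "Yv j t = [[2,21,9,18],[11,5,19,15],[12,24,22,17]] ! j ! t"
definition Wv :: "nat \<Rightarrow> nat \<Rightarrow> int" where
  "Wv j t = [[-3,3,-1,1],[1,-1,2,-2],[2,-2,-1,1]] ! j ! t"
definition s0 :: "int \<Rightarrow> nat \<Rightarrow> int" where
  "s0 a t = [a+1, 2*a+1, 4*a+1, 7*a+1] ! t"
definition sv :: "int \<Rightarrow> nat \<Rightarrow> nat \<Rightarrow> int" where
  "sv a j t = (if j < 2 then (if t = 0 then 2 - 2*a else 0) else [a - 3, 1 - 4*a, 1 - 6*a, 1 - 9*a] ! t)"

definition cj :: "int \<Rightarrow> nat" where
  "cj y = (if y \<in> {2,21,9,18} then 0 else if y \<in> {11,5,19,15} then 1 else 2)"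
definition ct :: "int \<Rightarrow> nat" where
  "ct y = (if y \<in> {2,11,12} then 0 else if y \<in> {21,5,24} then 1 else if y \<in> {9,19,22} then 2 else 3)"
definition Ys :: "int set" where
  "Ys = {2,21,9,18,11,5,19,15,12,24,22,17}"

lemma less3: "j < (3::nat) \<longleftrightarrow> j = 0 \<or> j = 1 \<or> j = 2" by auto
lemma less4: "j < (4::nat) \<longleftrightarrow> j = 0 \<or> j = 1 \<or> j = 2 \<or> j = 3" by auto
lemma less7: "j < (7::nat) \<longleftrightarrow> j = 0 \<or> j = 1 \<or> j = 2 \<or> j = 3 \<or> j = 4 \<or> j = 5 \<or> j = 6" by auto

lemma Yv_props:
  assumes "j < 3" "t < 4"
  shows "cj (Yv j t) = j \<and> ct (Yv j t) = t \<and> Yv j t \<in> Ys \<and> 0 < Yv j t \<and> Yv j t < 25"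
  using assms unfolding less3 less4
  by (elim disjE) (simp_all add: Yv_def cj_def ct_def Ys_def)

lemma Ys_cell:
  assumes "y \<in> Ys" shows "cj y < 3 \<and> ct y < 4 \<and> Yv (cj y) (ct y) = y"
  using assms unfolding Ys_def
  by (elim insertE emptyE) (simp_all add: Yv_def cj_def ct_def)

lemma Ys_half: "y \<in> {1..24} \<Longrightarrow> y \<in> Ys \<longleftrightarrow> 25 - y \<notin> Ys"
proof -
  assume "y \<in> {1..24}"
  then have "y \<in> {1,2,3,4,5,6,7,8,9,10,11,12,13,14,15,16,17,18,19,20,21,22,23,24}" by (simp; presburger)
  then show ?thesis unfolding Ys_def by (elim insertE emptyE) simp_all
qed

lemma zero_notin_Ys: "0 \<notin> Ys" by (simp add: Ys_def)

text \<open>Slot description of the seven base blocks: three rows and four columns.\<close>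

definition yv :: "nat \<Rightarrow> nat \<Rightarrow> int" where
  "yv b i = (if b < 3 then Yv b i else if i < 3 then Yv i (b - 3) else 0)"
definition sg :: "nat \<Rightarrow> nat \<Rightarrow> int" where
  "sg b i = (if b < 3 then (if i < 2 then 1 else -1) else if i < 2 then -1 else 1)"
definition om :: "nat \<Rightarrow> nat \<Rightarrow> int" where
  "om b i = (if b < 3 then Wv b i else if i < 3 then Wv i (b - 3) else 0)"
definition kap :: "int \<Rightarrow> nat \<Rightarrow> nat \<Rightarrow> int" where
  "kap a b i = (if b < 3 then sv a b i + (if i < 2 then a else 8*a)
     else if i < 3 then sv a i (b - 3) + (if i < 2 then a - 1 else 0) else s0 a (b - 3))"
definition xv :: "int \<Rightarrow> int \<Rightarrow> nat \<Rightarrow> nat \<Rightarrow> int \<Rightarrow> int" where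
  "xv a l b i h = kap a b i + sg b i * h + l * om b i"

definition qq :: "int \<Rightarrow> int" where "qq a = 8 * a + 1"

definition enc :: "int \<Rightarrow> int \<Rightarrow> nat \<Rightarrow> nat \<Rightarrow> int \<Rightarrow> int" where
  "enc a l b i h = mk (qq a) (xv a l b i h) (yv b i)"

definition Lh :: "int \<Rightarrow> nat \<Rightarrow> int" where
  "Lh a b = (if b < 3 then 7 * a + 1 else a)"

definition Xs :: "int \<Rightarrow> int set" where
  "Xs a = {a+1..3*a} \<union> {4*a+1..5*a} \<union> {7*a+1..8*a}"

definition Vs :: "int \<Rightarrow> int set" where
  "Vs a = {u \<in> {0..<qq a * 25}. u div qq a \<in> Ys \<or> (u div qq a = 0 \<and> u mod qq a \<in> Xs a)}"

definition tsel :: "int \<Rightarrow> int \<Rightarrow> nat" where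
  "tsel a x = (if x \<le> 2*a then 0 else if x \<le> 3*a then 1 else if x \<le> 5*a then 2 else 3)"

definition dec :: "int \<Rightarrow> int \<Rightarrow> int \<Rightarrow> nat \<times> nat \<times> int" where
  "dec a l u = (let y = u div qq a; x = u mod qq a in
     if y = 0 then (3 + tsel a x, 3, x - s0 a (tsel a x))
     else (let j = cj y; t = ct y; p = (x - sv a j t - l * Wv j t) mod qq a in
       if p < a then (3 + t, j, if j < 2 then a - 1 - p else p)
       else (j, t, if t < 2 then p - a else 8 * a - p)))"

lemma yv_row: "b < 3 \<Longrightarrow> yv b i = Yv b i" by (simp add: yv_def)
lemma yv_col: "\<not> b < 3 \<Longrightarrow> i < 3 \<Longrightarrow> yv b i = Yv i (b - 3)" by (simp add: yv_def)
lemma yv_zero: "\<not> b < 3 \<Longrightarrow> \<not> i < 3 \<Longrightarrow> yv b i = 0" by (simp add: yv_def)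

lemma xv_row: "b < 3 \<Longrightarrow> xv a l b i h = sv a b i + (if i < 2 then a + h else 8 * a - h) + l * Wv b i"
  by (simp add: xv_def kap_def sg_def om_def)
lemma xv_col: "\<not> b < 3 \<Longrightarrow> i < 3 \<Longrightarrow>
   xv a l b i h = sv a i (b - 3) + (if i < 2 then a - 1 - h else h) + l * Wv i (b - 3)"
  by (simp add: xv_def kap_def sg_def om_def)
lemma xv_zero: "\<not> b < 3 \<Longrightarrow> \<not> i < 3 \<Longrightarrow> xv a l b i h = s0 a (b - 3) + h"
  by (simp add: xv_def kap_def sg_def om_def)

lemma s0_props:
  assumes "t < 4" "a \<ge> 1" "0 \<le> h" "h < a"
  shows "tsel a (s0 a t + h) = t \<and> s0 a t + h \<in> Xs a \<and> 0 < s0 a t + h \<and> s0 a t + h < qq a"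
  using assms unfolding less4
  by (elim disjE) (auto simp: s0_def tsel_def Xs_def qq_def)

lemma Xs_tsel:
  assumes "x \<in> Xs a" "a \<ge> 1"
  shows "tsel a x < 4 \<and> 0 \<le> x - s0 a (tsel a x) \<and> x - s0 a (tsel a x) < a"
  using assms by (auto simp: s0_def tsel_def Xs_def)

lemma qq_pos: "a \<ge> 1 \<Longrightarrow> qq a > 0" by (simp add: qq_def)

lemma yv_range: "b < 7 \<Longrightarrow> i < 4 \<Longrightarrow> 0 \<le> yv b i \<and> yv b i < 25"
proof -
  assume b: "b < 7" and i: "i < 4"
  show ?thesis
  proof (cases "b < 3")
    case True then show ?thesis using Yv_props[of b i] i by (simp add: yv_row)
  next
    case False
    show ?thesis
    proof (cases "i < 3")
      case True
      have "b - 3 < 4" using b by simp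
      then show ?thesis using Yv_props[of i "b - 3"] True \<open>\<not> b < 3\<close> by (simp add: yv_col)
    next
      case False then show ?thesis using \<open>\<not> b < 3\<close> by (simp add: yv_zero)
    qed
  qed
qed

lemma enc_mod: "a \<ge> 1 \<Longrightarrow> enc a l b i h mod qq a = xv a l b i h mod qq a"
  by (simp add: enc_def mk_mod qq_pos)

lemma enc_div: "a \<ge> 1 \<Longrightarrow> b < 7 \<Longrightarrow> i < 4 \<Longrightarrow> enc a l b i h div qq a = yv b i"
  using yv_range[of b i] by (simp add: enc_def mk_div qq_pos)

lemma enc_carrier: "a \<ge> 1 \<Longrightarrow> enc a l b i h \<in> {0..<qq a * 25}"
  unfolding enc_def by (rule mk_carrier) (simp add: qq_def)

lemma dec_enc:
  assumes a: "a \<ge> 1" and b: "b < 7" and i: "i < 4" and h: "0 \<le> h" "h < Lh a b"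
  shows "enc a l b i h \<in> Vs a \<and> dec a l (enc a l b i h) = (b, i, h)"
proof -
  let ?q = "qq a"
  let ?u = "enc a l b i h"
  have q: "?q > 0" using a by (simp add: qq_def)
  have ud: "?u div ?q = yv b i" using enc_div[OF a b i] .
  have um: "?u mod ?q = xv a l b i h mod ?q" using enc_mod[OF a] .
  have uc: "?u \<in> {0..<?q * 25}" using enc_carrier[OF a] .
  show ?thesis
  proof (cases "b < 3")
    case True
    have Y: "cj (Yv b i) = b" "ct (Yv b i) = i" "Yv b i \<in> Ys" "Yv b i \<noteq> 0"
      using Yv_props[OF True i] by auto
    have hb: "h < 7 * a + 1" using h True by (simp add: Lh_def)
    define pp where "pp = (if i < 2 then a + h else 8 * a - h)"
    have pp_rng: "a \<le> pp" "pp < ?q" using h hb a by (auto simp: pp_def qq_def)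
    have "(?u mod ?q - sv a b i - l * Wv b i) mod ?q = (xv a l b i h - sv a b i - l * Wv b i) mod ?q"
      using um by (metis mod_diff_left_eq)
    also have "\<dots> = pp mod ?q" using True by (simp add: xv_row pp_def)
    also have "\<dots> = pp" using pp_rng a by (simp add: qq_def)
    finally have p: "(?u mod ?q - sv a b i - l * Wv b i) mod ?q = pp" .
    have hh: "(if i < 2 then pp - a else 8 * a - pp) = h" by (simp add: pp_def)
    have "dec a l ?u = (b, i, h)"
      unfolding dec_def Let_def using ud True Y p pp_rng by (simp add: yv_row pp_def)
    moreover have "?u \<in> Vs a" using uc ud Y True by (simp add: Vs_def yv_row)
    ultimately show ?thesis by simp
  next
    case False
    note nb = False
    show ?thesis
    proof (cases "i < 3")
      case True
      have t: "b - 3 < 4" using b by simp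
      have Y: "cj (Yv i (b-3)) = i" "ct (Yv i (b-3)) = b - 3" "Yv i (b-3) \<in> Ys" "Yv i (b-3) \<noteq> 0"
        using Yv_props[OF True t] by auto
      have hb: "h < a" using h nb by (simp add: Lh_def)
      define pp where "pp = (if i < 2 then a - 1 - h else h)"
      have pp_rng: "0 \<le> pp" "pp < a" "pp < ?q" using h hb a by (auto simp: pp_def qq_def)
      have "(?u mod ?q - sv a i (b-3) - l * Wv i (b-3)) mod ?q
            = (xv a l b i h - sv a i (b-3) - l * Wv i (b-3)) mod ?q"
        using um by (metis mod_diff_left_eq)
      also have "\<dots> = pp mod ?q" using nb True by (simp add: xv_col pp_def)
      also have "\<dots> = pp" using pp_rng by simp
      finally have p: "(?u mod ?q - sv a i (b-3) - l * Wv i (b-3)) mod ?q = pp" .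
      have hh: "(if i < 2 then a - 1 - pp else pp) = h" by (simp add: pp_def)
      have "dec a l ?u = (3 + (b - 3), i, h)"
        unfolding dec_def Let_def using ud nb True Y p pp_rng by (simp add: yv_col pp_def)
      moreover have "3 + (b - 3) = b" using nb by simp
      moreover have "?u \<in> Vs a" using uc ud Y nb True by (simp add: Vs_def yv_col)
      ultimately show ?thesis by simp
    next
      case False
      have i3: "i = 3" using i False by simp
      have t: "b - 3 < 4" using b by simp
      have hb: "h < a" using h nb by (simp add: Lh_def)
      have S: "tsel a (s0 a (b-3) + h) = b - 3" "s0 a (b-3) + h \<in> Xs a"
              "0 < s0 a (b-3) + h" "s0 a (b-3) + h < ?q"
        using s0_props[OF t a h(1) hb] by auto
      have x: "?u mod ?q = s0 a (b-3) + h" using um nb False S by (simp add: xv_zero)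
      have y: "?u div ?q = 0" using ud nb False by (simp add: yv_zero)
      have "dec a l ?u = (3 + (b - 3), 3, h)"
        unfolding dec_def Let_def using x y S by simp
      moreover have "3 + (b - 3) = b" using nb by simp
      moreover have "?u \<in> Vs a" using uc x y S by (simp add: Vs_def)
      ultimately show ?thesis using i3 by simp
    qed
  qed
qed

lemma enc_dec:
  assumes a: "a \<ge> 1" and u: "u \<in> Vs a"
  shows "fst (dec a l u) < 7 \<and> fst (snd (dec a l u)) < 4 \<and> 0 \<le> snd (snd (dec a l u))
         \<and> snd (snd (dec a l u)) < Lh a (fst (dec a l u))
         \<and> enc a l (fst (dec a l u)) (fst (snd (dec a l u))) (snd (snd (dec a l u))) = u"
proof -
  let ?q = "qq a"
  have q: "?q > 0" using a by (simp add: qq_def)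
  have uc: "u \<in> {0..<?q * 25}" using u by (simp add: Vs_def)
  have ueq: "u = mk ?q (u mod ?q) (u div ?q)" using carrier_mk[OF q uc] .
  have xr: "0 \<le> u mod ?q" "u mod ?q < ?q" using q by auto
  show ?thesis
  proof (cases "u div ?q = 0")
    case True
    have X: "u mod ?q \<in> Xs a" using u True by (simp add: Vs_def zero_notin_Ys)
    define t where "t = tsel a (u mod ?q)"
    have T: "t < 4" "0 \<le> u mod ?q - s0 a t" "u mod ?q - s0 a t < a"
      using Xs_tsel[OF X a] by (auto simp: t_def)
    have d: "dec a l u = (3 + t, 3, u mod ?q - s0 a t)"
      unfolding dec_def Let_def t_def using True by simp
    have "enc a l (3 + t) 3 (u mod ?q - s0 a t) = mk ?q (u mod ?q) 0"
      unfolding enc_def by (simp add: xv_zero yv_zero)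
    also have "\<dots> = u" using ueq True by simp
    finally show ?thesis using d T by (simp add: Lh_def)
  next
    case False
    have Yu: "u div ?q \<in> Ys" using u False by (simp add: Vs_def)
    define y where "y = u div ?q"
    define j where "j = cj y"
    define t where "t = ct y"
    have C: "j < 3" "t < 4" "Yv j t = y" using Ys_cell[OF Yu] by (auto simp: j_def t_def y_def)
    define p where "p = (u mod ?q - sv a j t - l * Wv j t) mod ?q"
    have pr: "0 \<le> p" "p < ?q" using q by (auto simp: p_def)
    have pcong: "(sv a j t + p + l * Wv j t) mod ?q = u mod ?q"
    proof -
      have "(sv a j t + p + l * Wv j t) mod ?q = (sv a j t + (u mod ?q - sv a j t - l * Wv j t) + l * Wv j t) mod ?q"
        unfolding p_def by (metis mod_add_left_eq mod_add_right_eq)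
      also have "\<dots> = u mod ?q" by simp
      finally show ?thesis .
    qed
    show ?thesis
    proof (cases "p < a")
      case True
      define h where "h = (if j < 2 then a - 1 - p else p)"
      have d: "dec a l u = (3 + t, j, h)"
        unfolding dec_def Let_def using False True by (simp add: y_def[symmetric] j_def[symmetric] t_def[symmetric] p_def[symmetric] h_def)
      have hr: "0 \<le> h" "h < a" using pr True by (auto simp: h_def)
      have xe: "xv a l (3 + t) j h = sv a j t + p + l * Wv j t"
        using C by (simp add: xv_col h_def)
      have "enc a l (3 + t) j h = mk ?q (sv a j t + p + l * Wv j t) y"
        unfolding enc_def using xe C by (simp add: yv_col)
      also have "\<dots> = mk ?q (u mod ?q) (u div ?q)"
        by (rule mk_eqI) (simp_all add: pcong y_def)
      also have "\<dots> = u" using ueq by simp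
      finally show ?thesis using d C hr by (simp add: Lh_def)
    next
      case False
      define h where "h = (if t < 2 then p - a else 8 * a - p)"
      have d: "dec a l u = (j, t, h)"
        unfolding dec_def Let_def using \<open>u div ?q \<noteq> 0\<close> False
        by (simp add: y_def[symmetric] j_def[symmetric] t_def[symmetric] p_def[symmetric] h_def)
      have hr: "0 \<le> h" "h < 7 * a + 1" using pr False by (auto simp: h_def qq_def)
      have xe: "xv a l j t h = sv a j t + p + l * Wv j t"
        using C by (simp add: xv_row h_def)
      have "enc a l j t h = mk ?q (sv a j t + p + l * Wv j t) y"
        unfolding enc_def using xe C by (simp add: yv_row)
      also have "\<dots> = mk ?q (u mod ?q) (u div ?q)"
        by (rule mk_eqI) (simp_all add: pcong y_def)
      also have "\<dots> = u" using ueq by simp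
      finally show ?thesis using d C hr by (simp add: Lh_def)
    qed
  qed
qed

lemma sum4: "(\<Sum>i<(4::nat). f i) = f 0 + f 1 + f 2 + f 3"
  by (simp add: eval_nat_numeral)

lemma kap_sum: "b < 7 \<Longrightarrow> (\<Sum>i<4. kap a b i) = (if b < 2 then 2 * qq a else 0)"
  unfolding sum4 less7
  by (elim disjE) (simp_all add: kap_def sv_def s0_def qq_def)

lemma sg_sum: "b < 7 \<Longrightarrow> (\<Sum>i<4. sg b i) = 0"
  unfolding sum4 less7 by (elim disjE) (simp_all add: sg_def)

lemma om_sum: "b < 7 \<Longrightarrow> (\<Sum>i<4. om b i) = 0"
  unfolding sum4 less7 by (elim disjE) (simp_all add: om_def Wv_def)

lemma yv_sum: "b < 7 \<Longrightarrow> (\<Sum>i<4. yv b i) mod 25 = 0"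
  unfolding sum4 less7 by (elim disjE) (simp_all add: yv_def Yv_def)

lemma sg_sq: "sg b i * sg b i = 1"
  by (simp add: sg_def)

lemma som_bound: "b < 7 \<Longrightarrow> i < 4 \<Longrightarrow> \<bar>sg b i * om b i\<bar> \<le> 3"
  unfolding less7 less4 by (elim disjE) (simp_all add: sg_def om_def Wv_def)

lemma som_dist: "b < 7 \<Longrightarrow> i < 4 \<Longrightarrow> i' < 4 \<Longrightarrow> i \<noteq> i' \<Longrightarrow> sg b i * om b i \<noteq> sg b i' * om b i'"
  unfolding less7 less4 by (elim disjE) (simp_all add: sg_def om_def Wv_def)

lemma Yv_inj: "j < 3 \<Longrightarrow> t < 4 \<Longrightarrow> j' < 3 \<Longrightarrow> t' < 4 \<Longrightarrow> Yv j t = Yv j' t' \<Longrightarrow> j = j' \<and> t = t'"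
  by (metis Yv_props)

lemma yv_eq:
  assumes "b < 7" "i < 4" "b' < 7" "i' < 4" "yv b i = yv b' i'"
  shows "(b = b' \<and> i = i') \<or> (b < 3 \<and> \<not> b' < 3 \<and> i' = b \<and> i = b' - 3)
       \<or> (\<not> b < 3 \<and> b' < 3 \<and> i = b' \<and> i' = b - 3) \<or> (\<not> b < 3 \<and> \<not> b' < 3 \<and> i = 3 \<and> i' = 3)"
proof -
  have nz: "\<And>j t. j < 3 \<Longrightarrow> t < 4 \<Longrightarrow> Yv j t \<noteq> 0" using Yv_props by fastforce
  show ?thesis
  proof (cases "b < 3")
    case True
    then have e: "yv b i = Yv b i" by (simp add: yv_row)
    show ?thesis
    proof (cases "b' < 3")
      case True
      then show ?thesis using assms e Yv_inj[of b i b' i'] \<open>b < 3\<close> by (simp add: yv_row)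
    next
      case False
      show ?thesis
      proof (cases "i' < 3")
        case True
        have "b' - 3 < 4" using assms by simp
        then show ?thesis using assms e Yv_inj[of b i i' "b' - 3"] \<open>b < 3\<close> False True by (simp add: yv_col)
      next
        case False
        then show ?thesis using assms e nz[of b i] \<open>b < 3\<close> \<open>\<not> b' < 3\<close> by (simp add: yv_zero)
      qed
    qed
  next
    case False
    note nb = False
    show ?thesis
    proof (cases "i < 3")
      case True
      have t: "b - 3 < 4" using assms by simp
      have e: "yv b i = Yv i (b - 3)" using nb True by (simp add: yv_col)
      show ?thesis
      proof (cases "b' < 3")
        case True
        then show ?thesis using assms e Yv_inj[of i "b - 3" b' i'] t nb \<open>i < 3\<close> by (simp add: yv_row)
      next
        case False
        show ?thesis
        proof (cases "i' < 3")
          case True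
          have "b' - 3 < 4" using assms by simp
          then have "i = i' \<and> b - 3 = b' - 3"
            using assms e Yv_inj[of i "b - 3" i' "b' - 3"] t \<open>i < 3\<close> False True by (simp add: yv_col)
          then show ?thesis using nb False by auto
        next
          case False
          then show ?thesis using assms e nz[of i "b - 3"] t \<open>i < 3\<close> \<open>\<not> b' < 3\<close> by (simp add: yv_zero)
        qed
      qed
    next
      case False
      note ni = False
      have e: "yv b i = 0" using nb ni by (simp add: yv_zero)
      show ?thesis
      proof (cases "b' < 3")
        case True
        then show ?thesis using assms e nz[of b' i'] by (simp add: yv_row)
      next
        case False
        show ?thesis
        proof (cases "i' < 3")
          case True
          have "b' - 3 < 4" using assms by simp
          then show ?thesis using assms e nz[of i' "b' - 3"] True False by (simp add: yv_col)
        next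
          case False
          then show ?thesis using assms ni nb \<open>\<not> b' < 3\<close> by simp
        qed
      qed
    qed
  qed
qed

lemma yv_inj_slot: "b < 7 \<Longrightarrow> i < 4 \<Longrightarrow> i' < 4 \<Longrightarrow> yv b i = yv b i' \<Longrightarrow> i = i'"
proof -
  assume as: "b < 7" "i < 4" "i' < 4" "yv b i = yv b i'"
  have "(b = b \<and> i = i') \<or> (b < 3 \<and> \<not> b < 3 \<and> i' = b \<and> i = b - 3)
       \<or> (\<not> b < 3 \<and> b < 3 \<and> i = b \<and> i' = b - 3) \<or> (\<not> b < 3 \<and> \<not> b < 3 \<and> i = 3 \<and> i' = 3)"
    using yv_eq[OF as(1,2,1,3,4)] .
  then show "i = i'" by auto
qed

lemma crossing:
  assumes "b < 7" "b' < 7" "i1 < 4" "i2 < 4" "i1' < 4" "i2' < 4" "i1 \<noteq> i2"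
    "yv b i1 = yv b' i1'" "yv b i2 = yv b' i2'"
  shows "b = b' \<and> i1 = i1' \<and> i2 = i2'"
proof -
  have A: "(b = b' \<and> i1 = i1') \<or> (b < 3 \<and> \<not> b' < 3 \<and> i1' = b \<and> i1 = b' - 3)
       \<or> (\<not> b < 3 \<and> b' < 3 \<and> i1 = b' \<and> i1' = b - 3) \<or> (\<not> b < 3 \<and> \<not> b' < 3 \<and> i1 = 3 \<and> i1' = 3)"
    using yv_eq[OF assms(1,3,2,5,8)] .
  have B: "(b = b' \<and> i2 = i2') \<or> (b < 3 \<and> \<not> b' < 3 \<and> i2' = b \<and> i2 = b' - 3)
       \<or> (\<not> b < 3 \<and> b' < 3 \<and> i2 = b' \<and> i2' = b - 3) \<or> (\<not> b < 3 \<and> \<not> b' < 3 \<and> i2 = 3 \<and> i2' = 3)"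
    using yv_eq[OF assms(1,4,2,6,9)] .
  have bb: "b = b'"
  proof (rule ccontr)
    assume nb: "b \<noteq> b'"
    from A B nb assms(7) show False by (elim disjE) auto
  qed
  have "i1 = i1'" using yv_inj_slot[of b i1 i1'] assms bb by simp
  moreover have "i2 = i2'" using yv_inj_slot[of b i2 i2'] assms bb by simp
  ultimately show ?thesis using bb by simp
qed

lemma ortho_arith:
  fixes q h h' L s1 s2 w1 w2 :: int
  assumes q: "q = 8 * a + 1" and L: "L \<noteq> 0" "\<bar>L\<bar> < a"
    and s: "s1 * s1 = 1" "s2 * s2 = 1" and w: "\<bar>s1 * w1\<bar> \<le> 3" "\<bar>s2 * w2\<bar> \<le> 3" "s1 * w1 \<noteq> s2 * w2"
    and d1: "q dvd (s1 * (h - h') + L * w1)" and d2: "q dvd (s2 * (h - h') + L * w2)"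
  shows False
proof -
  have e1: "s1 * (s1 * (h - h') + L * w1) = (h - h') + L * (s1 * w1)"
    using s(1) by (simp add: algebra_simps)
  have e2: "s2 * (s2 * (h - h') + L * w2) = (h - h') + L * (s2 * w2)"
    using s(2) by (simp add: algebra_simps)
  have "q dvd (h - h') + L * (s1 * w1)" using d1 e1 by (metis dvd_mult2 mult.commute)
  moreover have "q dvd (h - h') + L * (s2 * w2)" using d2 e2 by (metis dvd_mult2 mult.commute)
  ultimately have "q dvd ((h - h') + L * (s1 * w1)) - ((h - h') + L * (s2 * w2))" by (rule dvd_diff)
  then have dz: "q dvd L * (s1 * w1 - s2 * w2)" by (simp add: algebra_simps)
  have nz: "L * (s1 * w1 - s2 * w2) \<noteq> 0" using L w by simp
  have "\<bar>s1 * w1 - s2 * w2\<bar> \<le> 6" using w by linarith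
  then have "\<bar>L * (s1 * w1 - s2 * w2)\<bar> \<le> \<bar>L\<bar> * 6"
    by (simp add: abs_mult mult_left_mono)
  also have "\<dots> < q" using L q by linarith
  finally have lt: "\<bar>L * (s1 * w1 - s2 * w2)\<bar> < q" .
  have "\<bar>q\<bar> \<le> \<bar>L * (s1 * w1 - s2 * w2)\<bar>" using dvd_imp_le_int[OF nz dz] .
  then show False using lt by linarith
qed

definition blk :: "int \<Rightarrow> int \<Rightarrow> nat \<Rightarrow> int \<Rightarrow> int set" where
  "blk a l b h = (\<lambda>i. enc a l b i h) ` {..<4::nat}"

definition Pcls :: "int \<Rightarrow> int \<Rightarrow> int set set" where
  "Pcls a l = {blk a l b h | b h. b < 7 \<and> 0 \<le> h \<and> h < Lh a b}"

lemma blk_sub: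
  assumes "a \<ge> 1" "b < 7" "0 \<le> h" "h < Lh a b"
  shows "blk a l b h \<subseteq> Vs a"
proof
  fix u assume "u \<in> blk a l b h"
  then obtain i where i: "i < 4" "u = enc a l b i h" by (auto simp: blk_def)
  show "u \<in> Vs a" using dec_enc[OF assms(1,2) i(1) assms(3,4)] i(2) by simp
qed

lemma enc_inj:
  assumes "a \<ge> 1" "b < 7" "i < 4" "0 \<le> h" "h < Lh a b"
    "b' < 7" "i' < 4" "0 \<le> h'" "h' < Lh a b'"
    "enc a l b i h = enc a l b' i' h'"
  shows "b = b' \<and> i = i' \<and> h = h'"
proof -
  have "dec a l (enc a l b i h) = (b, i, h)" using dec_enc[OF assms(1,2,3,4,5)] by simp
  moreover have "dec a l (enc a l b' i' h') = (b', i', h')" using dec_enc[OF assms(1,6,7,8,9)] by simp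
  ultimately have "(b, i, h) = (b', i', h')" using assms(10) by metis
  then show ?thesis by simp
qed

lemma blk_card:
  assumes "a \<ge> 1" "b < 7" "0 \<le> h" "h < Lh a b"
  shows "card (blk a l b h) = 4"
proof -
  have "inj_on (\<lambda>i. enc a l b i h) {..<4::nat}"
  proof (rule inj_onI)
    fix i i' assume "i \<in> {..<4::nat}" "i' \<in> {..<4::nat}" "enc a l b i h = enc a l b i' h"
    then show "i = i'" using enc_inj[OF assms(1,2) _ assms(3,4) assms(2) _ assms(3,4), of i i' l] by simp
  qed
  then show ?thesis by (simp add: blk_def card_image)
qed

lemma blk_prod:
  assumes a: "a \<ge> 1" and b: "b < 7" and h: "0 \<le> h" "h < Lh a b"
  shows "finprod (Gq (qq a)) id (blk a l b h) = \<one>\<^bsub>Gq (qq a)\<^esub>"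
proof -
  let ?q = "qq a"
  have q: "?q > 0" using a by (simp add: qq_def)
  have inj: "inj_on (\<lambda>i. enc a l b i h) {..<4::nat}"
  proof (rule inj_onI)
    fix i i' assume "i \<in> {..<4::nat}" "i' \<in> {..<4::nat}" "enc a l b i h = enc a l b i' h"
    then show "i = i'" using enc_inj[OF a b _ h b _ h, of i i' l] by simp
  qed
  have sub: "blk a l b h \<subseteq> {0..<?q * 25}" using blk_sub[OF a b h, of l] unfolding Vs_def by blast
  have fin: "finite (blk a l b h)" by (simp add: blk_def)
  have "finprod (Gq ?q) id (blk a l b h) = finprod (Gq ?q) (\<lambda>u. u) (blk a l b h)"
    by (simp add: id_def)
  also have "\<dots> = mk ?q (\<Sum>u\<in>blk a l b h. u mod ?q) (\<Sum>u\<in>blk a l b h. u div ?q)"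
    using Gq_finprod[OF q fin sub] .
  also have "(\<Sum>u\<in>blk a l b h. u mod ?q) = (\<Sum>i<4. xv a l b i h mod ?q)"
    unfolding blk_def by (simp add: sum.reindex[OF inj] enc_mod[OF a])
  also have "(\<Sum>u\<in>blk a l b h. u div ?q) = (\<Sum>i<4. yv b i)"
    unfolding blk_def by (simp add: sum.reindex[OF inj] enc_div[OF a b])
  also have "mk ?q (\<Sum>i<4. xv a l b i h mod ?q) (\<Sum>i<4. yv b i) = mk ?q 0 0"
  proof (rule mk_eqI)
    have "(\<Sum>i<4. xv a l b i h mod ?q) mod ?q = (\<Sum>i<4. xv a l b i h) mod ?q"
      by (rule mod_sum_eq)
    also have "(\<Sum>i<4. xv a l b i h) = (\<Sum>i<4. kap a b i) + h * (\<Sum>i<4. sg b i) + l * (\<Sum>i<4. om b i)"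
      by (simp add: xv_def sum.distrib sum_distrib_left mult.commute)
    also have "\<dots> = (if b < 2 then 2 * ?q else 0)"
      using kap_sum[OF b, of a] sg_sum[OF b] om_sum[OF b] by simp
    finally show "(\<Sum>i<4. xv a l b i h mod ?q) mod ?q = 0 mod ?q" by simp
    show "(\<Sum>i<4. yv b i) mod 25 = 0 mod 25" using yv_sum[OF b] by simp
  qed
  also have "\<dots> = \<one>\<^bsub>Gq ?q\<^esub>" by (simp add: mk_def Gq_one)
  finally show ?thesis .
qed

lemma union_Pcls:
  assumes a: "a \<ge> 1"
  shows "\<Union>(Pcls a l) = Vs a"
proof
  show "\<Union>(Pcls a l) \<subseteq> Vs a" using blk_sub[OF a] by (auto simp: Pcls_def)
next
  show "Vs a \<subseteq> \<Union>(Pcls a l)"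
  proof
    fix u assume u: "u \<in> Vs a"
    define b where "b = fst (dec a l u)"
    define i where "i = fst (snd (dec a l u))"
    define h where "h = snd (snd (dec a l u))"
    have D: "b < 7" "i < 4" "0 \<le> h" "h < Lh a b" "enc a l b i h = u"
      using enc_dec[OF a u, of l] by (auto simp: b_def i_def h_def)
    have "u \<in> blk a l b h" using D by (auto simp: blk_def)
    moreover have "blk a l b h \<in> Pcls a l" using D by (auto simp: Pcls_def)
    ultimately show "u \<in> \<Union>(Pcls a l)" by blast
  qed
qed

lemma disj_Pcls:
  assumes a: "a \<ge> 1" and B: "B \<in> Pcls a l" and B': "B' \<in> Pcls a l" and ne: "B \<noteq> B'"
  shows "B \<inter> B' = {}"
proof (rule ccontr)
  assume "B \<inter> B' \<noteq> {}"
  then obtain u where u: "u \<in> B" "u \<in> B'" by blast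
  obtain b h where bh: "B = blk a l b h" "b < 7" "0 \<le> h" "h < Lh a b" using B by (auto simp: Pcls_def)
  obtain b' h' where bh': "B' = blk a l b' h'" "b' < 7" "0 \<le> h'" "h' < Lh a b'" using B' by (auto simp: Pcls_def)
  obtain i where i: "i < 4" "u = enc a l b i h" using u(1) bh(1) by (auto simp: blk_def)
  obtain i' where i': "i' < 4" "u = enc a l b' i' h'" using u(2) bh'(1) by (auto simp: blk_def)
  have e: "enc a l b i h = enc a l b' i' h'" using i(2) i'(2) by simp
  have "b = b' \<and> i = i' \<and> h = h'"
    using enc_inj[OF a bh(2) i(1) bh(3,4) bh'(2) i'(1) bh'(3,4) e] .
  then show False using ne bh(1) bh'(1) by simp
qed

lemma ortho_Pcls:
  assumes a: "a \<ge> 1" and B: "B \<in> Pcls a l" and B': "B' \<in> Pcls a l'"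
    and ll: "l \<noteq> l'" "\<bar>l - l'\<bar> < a"
  shows "card (B \<inter> B') \<le> 1"
proof -
  let ?q = "qq a"
  obtain b h where bh: "B = blk a l b h" "b < 7" "0 \<le> h" "h < Lh a b" using B by (auto simp: Pcls_def)
  obtain b' h' where bh': "B' = blk a l' b' h'" "b' < 7" "0 \<le> h'" "h' < Lh a b'" using B' by (auto simp: Pcls_def)
  have fin: "finite (B \<inter> B')" using bh(1) by (simp add: blk_def)
  have "\<forall>u\<in>B \<inter> B'. \<forall>v\<in>B \<inter> B'. u = v"
  proof (intro ballI, rule ccontr)
    fix u v assume u: "u \<in> B \<inter> B'" and v: "v \<in> B \<inter> B'" and uv: "u \<noteq> v"
    obtain i1 where i1: "i1 < 4" "u = enc a l b i1 h" using u bh(1) by (auto simp: blk_def)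
    obtain i1' where i1': "i1' < 4" "u = enc a l' b' i1' h'" using u bh'(1) by (auto simp: blk_def)
    obtain i2 where i2: "i2 < 4" "v = enc a l b i2 h" using v bh(1) by (auto simp: blk_def)
    obtain i2' where i2': "i2' < 4" "v = enc a l' b' i2' h'" using v bh'(1) by (auto simp: blk_def)
    have ne: "i1 \<noteq> i2" using uv i1 i2 by auto
    have e1: "enc a l b i1 h = enc a l' b' i1' h'" using i1(2) i1'(2) by simp
    have e2: "enc a l b i2 h = enc a l' b' i2' h'" using i2(2) i2'(2) by simp
    have y1: "yv b i1 = yv b' i1'"
      using arg_cong[OF e1, of "\<lambda>x. x div ?q"] enc_div[OF a bh(2) i1(1), of l h] enc_div[OF a bh'(2) i1'(1), of l' h'] by simp
    have y2: "yv b i2 = yv b' i2'"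
      using arg_cong[OF e2, of "\<lambda>x. x div ?q"] enc_div[OF a bh(2) i2(1), of l h] enc_div[OF a bh'(2) i2'(1), of l' h'] by simp
    have C: "b = b' \<and> i1 = i1' \<and> i2 = i2'"
      using crossing[OF bh(2) bh'(2) i1(1) i2(1) i1'(1) i2'(1) ne y1 y2] .
    have m1: "xv a l b i1 h mod ?q = xv a l' b i1 h' mod ?q"
      using arg_cong[OF e1, of "\<lambda>x. x mod ?q"] enc_mod[OF a, of l b i1 h] enc_mod[OF a, of l' b' i1' h'] C by simp
    have m2: "xv a l b i2 h mod ?q = xv a l' b i2 h' mod ?q"
      using arg_cong[OF e2, of "\<lambda>x. x mod ?q"] enc_mod[OF a, of l b i2 h] enc_mod[OF a, of l' b' i2' h'] C by simp
    have d1: "?q dvd (sg b i1 * (h - h') + (l - l') * om b i1)"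
      using m1 by (simp add: mod_eq_dvd_iff xv_def algebra_simps)
    have d2: "?q dvd (sg b i2 * (h - h') + (l - l') * om b i2)"
      using m2 by (simp add: mod_eq_dvd_iff xv_def algebra_simps)
    show False
      using ortho_arith[of ?q a "l - l'" "sg b i1" "sg b i2" "om b i1" "om b i2" h h']
        qq_def ll sg_sq som_bound[OF bh(2) i1(1)] som_bound[OF bh(2) i2(1)]
        som_dist[OF bh(2) i1(1) i2(1) ne] d1 d2 by simp
  qed
  then show ?thesis using card_le_Suc0_iff_eq[OF fin] by simp
qed

lemma Xs_half: assumes "0 < x" "x < qq a" "a \<ge> 1" shows "x \<in> Xs a \<longleftrightarrow> qq a - x \<notin> Xs a"
  using assms unfolding Xs_def qq_def atLeastAtMost_iff Un_iff by linarith

lemma half_Vs: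
  assumes a: "a \<ge> 1"
  shows "half_set (Gq (qq a)) (Vs a)"
proof -
  let ?q = "qq a"
  have q: "?q > 0" using a by (simp add: qq_def)
  have sub: "Vs a \<subseteq> carrier (Gq ?q) - {\<one>\<^bsub>Gq ?q\<^esub>}"
  proof
    fix u assume u: "u \<in> Vs a"
    have "u \<noteq> 0"
    proof
      assume "u = 0"
      then show False using u zero_notin_Ys a by (auto simp: Vs_def Xs_def)
    qed
    then show "u \<in> carrier (Gq ?q) - {\<one>\<^bsub>Gq ?q\<^esub>}" using u by (simp add: Vs_def Gq_carrier Gq_one)
  qed
  have main: "g \<in> Vs a \<longleftrightarrow> inv\<^bsub>Gq ?q\<^esub> g \<notin> Vs a" if g: "g \<in> carrier (Gq ?q) - {\<one>\<^bsub>Gq ?q\<^esub>}" for g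
  proof -
    have gc: "g \<in> {0..<?q * 25}" and g0: "g \<noteq> 0" using g by (auto simp: Gq_carrier Gq_one)
    have iv: "inv\<^bsub>Gq ?q\<^esub> g = mk ?q (- g) (- (g div ?q))" using Gq_inv[OF q gc] .
    have ic: "inv\<^bsub>Gq ?q\<^esub> g \<in> {0..<?q * 25}" using iv mk_carrier[OF q] by simp
    have idiv: "inv\<^bsub>Gq ?q\<^esub> g div ?q = (- (g div ?q)) mod 25" using iv mk_div[OF q] by simp
    have imod: "inv\<^bsub>Gq ?q\<^esub> g mod ?q = (- g) mod ?q" using iv mk_mod[OF q] by simp
    have yb: "0 \<le> g div ?q" "g div ?q < 25" using div_bound[OF q] gc by auto
    show ?thesis
    proof (cases "g div ?q = 0")
      case True
      have ge0: "mk ?q (g mod ?q) (g div ?q) = g mod ?q" using True by (simp add: mk_def)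
      have ge: "g = g mod ?q" using carrier_mk[OF q gc] ge0 by linarith
      have xr1: "0 \<le> g mod ?q" "g mod ?q < ?q" using q by auto
      have xr: "0 < g mod ?q" "g mod ?q < ?q" using xr1 ge g0 by linarith+
      have nm: "(- g) mod ?q = ?q - g mod ?q"
      proof -
        have "(- g) mod ?q = (- (g mod ?q)) mod ?q" by (simp add: mod_minus_eq)
        also have "\<dots> = (?q - g mod ?q) mod ?q" using mod_add_self1[of ?q "- (g mod ?q)"] by simp
        also have "\<dots> = ?q - g mod ?q" using xr by (intro mod_pos_pos_trivial) auto
        finally show ?thesis .
      qed
      have X: "g mod ?q \<in> Xs a \<longleftrightarrow> ?q - g mod ?q \<notin> Xs a"
        using Xs_half[OF xr a] .
      have A: "g \<in> Vs a \<longleftrightarrow> g mod ?q \<in> Xs a"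
        unfolding Vs_def using gc True zero_notin_Ys by simp
      have B: "inv\<^bsub>Gq ?q\<^esub> g \<in> Vs a \<longleftrightarrow> ?q - g mod ?q \<in> Xs a"
        unfolding Vs_def using ic idiv imod nm True zero_notin_Ys by simp
      show ?thesis using A B X by blast
    next
      case False
      have yr: "1 \<le> g div ?q" "g div ?q \<le> 24" using False yb by auto
      have nd: "(- (g div ?q)) mod 25 = 25 - g div ?q"
      proof -
        have "(- (g div ?q)) mod 25 = (25 - g div ?q) mod 25" using mod_add_self1[of 25 "- (g div ?q)"] by simp
        also have "\<dots> = 25 - g div ?q" using yr by (intro mod_pos_pos_trivial) auto
        finally show ?thesis .
      qed
      have yr': "g div ?q \<in> {1..24}" using yr by simp
      have Y: "g div ?q \<in> Ys \<longleftrightarrow> 25 - g div ?q \<notin> Ys" using Ys_half[OF yr'] .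
      have A: "g \<in> Vs a \<longleftrightarrow> g div ?q \<in> Ys"
        unfolding Vs_def using gc False by simp
      have B: "inv\<^bsub>Gq ?q\<^esub> g \<in> Vs a \<longleftrightarrow> 25 - g div ?q \<in> Ys"
        unfolding Vs_def using ic idiv nd yr by simp
      show ?thesis using A B Y by blast
    qed
  qed
  show ?thesis unfolding half_set_def using sub main by blast
qed

theorem mainTheorem12:
  fixes r :: nat
  assumes "r \<ge> 1"
  shows "\<exists>(G :: int monoid) V k P.
           comm_group G \<and> finite (carrier G) \<and> odd (card (carrier G)) \<and>
           card (carrier G) \<ge> 7 \<and> heffter_space G V k r P"
proof -
  define a where "a = int r"
  have a: "a \<ge> 1" using assms by (simp add: a_def)
  have q: "qq a > 0" using a by (simp add: qq_def)
  define G where "G = Gq (qq a)"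
  define P where "P = (\<lambda>n::nat. Pcls a (int n))"
  have cg: "comm_group G" using Gq_comm_group[OF q] by (simp add: G_def)
  have cc: "card (carrier G) = 200 * r + 25"
  proof -
    have "card (carrier G) = nat (qq a * 25)" by (simp add: G_def Gq_carrier)
    also have "\<dots> = 200 * r + 25" by (simp add: qq_def a_def nat_add_distrib nat_mult_distrib)
    finally show ?thesis .
  qed
  have fc: "finite (carrier G)" by (simp add: G_def Gq_carrier)
  have hs: "heffter_space G (Vs a) 4 r P"
    unfolding heffter_space_def
  proof (intro conjI allI impI ballI)
    show "half_set G (Vs a)" using half_Vs[OF a] by (simp add: G_def)
  next
    fix i assume i: "i < r"
    show "heffter_system G (Vs a) 4 (P i)"
      unfolding heffter_system_def
    proof (intro conjI ballI impI)
      show "\<Union>(P i) = Vs a" using union_Pcls[OF a] by (simp add: P_def)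
    next
      fix B B' assume "B \<in> P i" "B' \<in> P i" "B \<noteq> B'"
      then show "B \<inter> B' = {}" using disj_Pcls[OF a] by (simp add: P_def)
    next
      fix B assume B: "B \<in> P i"
      then obtain b h where bh: "B = blk a (int i) b h" "b < 7" "0 \<le> h" "h < Lh a b"
        by (auto simp: P_def Pcls_def)
      show "card B = 4" using blk_card[OF a bh(2,3,4)] bh(1) by simp
      show "finprod G id B = \<one>\<^bsub>G\<^esub>" using blk_prod[OF a bh(2,3,4)] bh(1) by (simp add: G_def)
    qed
  next
    fix i j B B'
    assume i: "i < r" and j: "j < r" and B: "B \<in> P i" and B': "B' \<in> P j" and ne: "(i, B) \<noteq> (j, B')"
    show "card (B \<inter> B') \<le> 1"
    proof (cases "i = j")
      case True
      then have "B \<noteq> B'" using ne by simp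
      then have "B \<inter> B' = {}" using disj_Pcls[OF a] B B' True by (simp add: P_def)
      then show ?thesis by simp
    next
      case False
      have "\<bar>int i - int j\<bar> < a" using i j by (simp add: a_def)
      moreover have "int i \<noteq> int j" using False by simp
      ultimately show ?thesis using ortho_Pcls[OF a] B B' by (simp add: P_def)
    qed
  qed
  show ?thesis
    by (rule exI[of _ G], rule exI[of _ "Vs a"], rule exI[of _ 4], rule exI[of _ P])
       (use cg fc cc hs in auto)
qed

end
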